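(* Let $b\ge a>1$ and define, for $t\in\mathbb{R}$, $$F_1(t)=\sum_{j=2}^\infty\frac{\exp\big(i t\, j^2(\log j)^b\big)}{j(\log j)^a}.$$ Then $F_1$, $\operatorname{Re}F_1$ and $\operatorname{Im}F_1$ are continuous and bounded on $\mathbb{R}$ but differentiable at no point of $\mathbb{R}$. If $b>a>1$, none of them is Lipschitz continuous at any point of $\mathbb{R}$.
   Context: A function $g\colon\mathbb{R}\to\mathbb{C}$ is Lipschitz continuous at $t_0$ if there exist constants $L>0$, $\eta>0$ such that $|g(t)-g(t_0)|\le L|t-t_0|$ for all $t\in\,]t_0-\eta,t_0+\eta[$. *)

theory Defs
  imports "HOL-Analysis.Analysis"
begin

definition F1 :: "real \<Rightarrow> real \<Rightarrow> real \<Rightarrow> complex" where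
  "F1 a b t = (\<Sum>n. let j = real (n + 2) in
      exp (\<i> * complex_of_real (t * j\<^sup>2 * (ln j) powr b))
        / complex_of_real (j * (ln j) powr a))"

definition lipschitz_at :: "(real \<Rightarrow> 'b::real_normed_vector) \<Rightarrow> real \<Rightarrow> bool" where
  "lipschitz_at g t0 \<longleftrightarrow> (\<exists>L>0. \<exists>\<eta>>0. \<forall>t. \<bar>t - t0\<bar> < \<eta> \<longrightarrow>
      norm (g t - g t0) \<le> L * \<bar>t - t0\<bar>)"

end

theory Submission
  imports Defs "HOL-Real_Asymp.Real_Asymp"
begin


definition lam :: "real \<Rightarrow> nat \<Rightarrow> real" where
  "lam b n = real (n+2)^2 * ln (real (n+2)) powr b"
definition ww :: "real \<Rightarrow> nat \<Rightarrow> real" where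
  "ww a n = real (n+2) * ln (real (n+2)) powr a"

lemma ln_pos2: "0 < ln (real (n+2))" by simp

lemma ww_pos: "0 < ww a n" unfolding ww_def by simp

lemma summable_ww:
  assumes "1 < a" shows "summable (\<lambda>n. 1 / ww a n)"
proof -
  define f where "f m = 1 / (real (max 2 m) * ln (real (max 2 m)) powr a)" for m :: nat
  have fpos: "f m \<ge> 0" for m unfolding f_def by simp
  have mono: "f (Suc m) \<le> f m" if "0 < m" for m
  proof -
    have h1: "real (max 2 m) \<le> real (max 2 (Suc m))" by simp
    have h2: "ln (real (max 2 m)) powr a \<le> ln (real (max 2 (Suc m))) powr a"
      using assms by (intro powr_mono2) auto
    have "real (max 2 m) * ln (real (max 2 m)) powr a \<le> real (max 2 (Suc m)) * ln (real (max 2 (Suc m))) powr a"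
      using h1 h2 by (intro mult_mono) auto
    moreover have "0 < real (max 2 m) * ln (real (max 2 m)) powr a" by simp
    ultimately show ?thesis unfolding f_def by (intro divide_left_mono) auto
  qed
  have "summable (\<lambda>n. 2^n * f (2^n))"
  proof (rule summable_comparison_test')
    show "summable (\<lambda>n. ln 2 powr (-a) * real n powr (-a))"
      using assms by (intro summable_mult) (simp add: summable_real_powr_iff)
    fix n :: nat assume "1 \<le> n"
    then have m: "max 2 (2^n) = (2::nat)^n"
      by (metis max.absorb2 one_less_numeral_iff power_increasing_iff power_one_right semiring_norm(76))
    have "ln (real (2^n)) = real n * ln 2" by (simp add: ln_realpow)
    then have "2^n * f (2^n) = (real n * ln 2) powr (-a)"
      unfolding f_def m using \<open>1 \<le> n\<close> by (simp add: powr_minus field_simps)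
    also have "\<dots> = ln 2 powr (-a) * real n powr (-a)"
      by (simp add: powr_mult mult.commute)
    finally show "norm (2^n * f (2^n)) \<le> ln 2 powr (-a) * real n powr (-a)" by simp
  qed
  then have "summable f" using condensation_test[of f] mono fpos by blast
  then have "summable (\<lambda>n. f (n+2))" by (rule summable_iff_shift[THEN iffD2])
  moreover have "f (n+2) = 1 / ww a n" for n unfolding f_def ww_def by simp
  ultimately show ?thesis by simp
qed


definition tm :: "real \<Rightarrow> real \<Rightarrow> complex \<Rightarrow> complex \<Rightarrow> real \<Rightarrow> nat \<Rightarrow> complex" where
  "tm a b A B t n = (A * exp (\<i> * of_real (t * lam b n)) + B * exp (\<i> * of_real (- (t * lam b n))))
      / of_real (ww a n)"

definition Hg :: "real \<Rightarrow> real \<Rightarrow> complex \<Rightarrow> complex \<Rightarrow> real \<Rightarrow> complex" where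
  "Hg a b A B t = (\<Sum>n. tm a b A B t n)"

lemma norm_tm:
  assumes "norm A \<le> 1" "norm B \<le> 1"
  shows "norm (tm a b A B t n) \<le> 2 / ww a n"
proof -
  have "norm (A * exp (\<i> * of_real (t * lam b n)) + B * exp (\<i> * of_real (- (t * lam b n)))) \<le> 2"
    using assms norm_triangle_le[of "A * exp (\<i> * of_real (t * lam b n))" "B * exp (\<i> * of_real (- (t * lam b n)))" 2]
    by (simp add: norm_mult)
  then show ?thesis using ww_pos[of a n] unfolding tm_def
    by (simp add: norm_divide divide_right_mono)
qed

lemma summable_2ww: "1 < a \<Longrightarrow> summable (\<lambda>n. 2 / ww a n)"
  using summable_mult[OF summable_ww, of a 2] by simp

lemma summable_tm:
  assumes "1 < a" "norm A \<le> 1" "norm B \<le> 1"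
  shows "summable (tm a b A B t)"
  apply (rule summable_comparison_test[of _ "\<lambda>n. 2 / ww a n"])
  using norm_tm[OF assms(2,3)] summable_mult[OF summable_ww[OF assms(1)], of 2] by auto

lemma tm_cnj: "tm a b A B t n = A * tm a b 1 0 t n + B * cnj (tm a b 1 0 t n)"
  unfolding tm_def by (simp add: exp_cnj add_divide_distrib)

lemma Hg_eq:
  assumes "1 < a"
  shows "Hg a b A B t = A * Hg a b 1 0 t + B * cnj (Hg a b 1 0 t)"
proof -
  have s: "summable (tm a b 1 0 t)" using summable_tm[OF assms] by simp
  have s2: "summable (\<lambda>n. cnj (tm a b 1 0 t n))" using s summable_sums sums_cnj
    by (metis sums_summable)
  have "Hg a b A B t = (\<Sum>n. A * tm a b 1 0 t n + B * cnj (tm a b 1 0 t n))"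
    unfolding Hg_def by (rule suminf_cong) (rule tm_cnj)
  also have "\<dots> = (\<Sum>n. A * tm a b 1 0 t n) + (\<Sum>n. B * cnj (tm a b 1 0 t n))"
    by (rule suminf_add[symmetric]) (auto intro: summable_mult s s2)
  also have "\<dots> = A * Hg a b 1 0 t + B * (\<Sum>n. cnj (tm a b 1 0 t n))"
    unfolding Hg_def using s s2 by (simp add: suminf_mult)
  also have "(\<Sum>n. cnj (tm a b 1 0 t n)) = cnj (Hg a b 1 0 t)"
    unfolding Hg_def using s sums_cnj by (metis summable_sums sums_unique)
  finally show ?thesis .
qed

lemma uniform_Hg:
  assumes "1 < a" "norm A \<le> 1" "norm B \<le> 1"
  shows "uniform_limit S (\<lambda>N t. \<Sum>n<N. tm a b A B t n) (Hg a b A B) sequentially"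
  unfolding Hg_def
  by (rule Weierstrass_m_test[OF norm_tm[OF assms(2,3)]]) (intro summable_2ww assms)

lemma cont_Hg:
  assumes "1 < a" "norm A \<le> 1" "norm B \<le> 1"
  shows "continuous_on S (Hg a b A B)"
  apply (rule uniform_limit_theorem[OF _ uniform_Hg[OF assms]])
  by (auto simp: tm_def intro!: always_eventually continuous_intros simp: ww_pos[THEN less_imp_neq, symmetric])

lemma bounded_Hg:
  assumes "1 < a" "norm A \<le> 1" "norm B \<le> 1"
  shows "norm (Hg a b A B t) \<le> (\<Sum>n. 2 / ww a n)"
proof -
  have s: "summable (\<lambda>n. 2 / ww a n)" by (intro summable_2ww assms)
  show ?thesis unfolding Hg_def
    by (rule order.trans[OF summable_norm]) (auto intro!: suminf_le summable_comparison_test[OF _ s] norm_tm assms simp: ww_pos less_imp_le)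
qed

lemma F1_eq: "F1 a b = Hg a b 1 0"
  by (auto simp: F1_def Hg_def tm_def lam_def ww_def Let_def mult.assoc intro!: ext)


definition ant :: "complex \<Rightarrow> complex \<Rightarrow> complex \<Rightarrow> complex \<Rightarrow> complex" where
  "ant C0 C1 z x = exp (z * x) * (
      (C0 + C1 * x) * (1 - x^2) / z
    - (C1 * (1 - x^2) - 2 * x * (C0 + C1 * x)) / z^2
    + (- 2 * C0 - 6 * C1 * x) / z^3
    - (- 6 * C1) / z^4)"

lemma ant_poly:
  assumes "z \<noteq> 0"
  shows "ant C0 C1 z x = exp (z * x) * ((C0/z - C1/z^2 - 2*C0/z^3 + 6*C1/z^4)
      + (C1/z + 2*C0/z^2 - 6*C1/z^3) * x + (- C0/z + 3*C1/z^2) * x^2 + (- C1/z) * x^3)"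
  unfolding ant_def using assms
  by (simp add: field_simps power2_eq_square power3_eq_cube eval_nat_numeral)

lemma ant_deriv:
  assumes "z \<noteq> 0"
  shows "(ant C0 C1 z has_field_derivative exp (z * x) * ((C0 + C1 * x) * (1 - x^2))) (at x)"
proof -
  define q0 where "q0 = C0/z - C1/z^2 - 2*C0/z^3 + 6*C1/z^4"
  define q1 where "q1 = C1/z + 2*C0/z^2 - 6*C1/z^3"
  define q2 where "q2 = - C0/z + 3*C1/z^2"
  define q3 where "q3 = - C1/z"
  have e: "ant C0 C1 z = (\<lambda>x. exp (z * x) * (q0 + q1 * x + q2 * x^2 + q3 * x^3))"
    using ant_poly[OF assms] unfolding q0_def q1_def q2_def q3_def by (intro ext) simp
  have "((\<lambda>x. exp (z * x) * (q0 + q1 * x + q2 * x^2 + q3 * x^3)) has_field_derivative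
      (exp (z * x) * z * (q0 + q1 * x + q2 * x^2 + q3 * x^3) + exp (z * x) * (q1 + 2 * q2 * x + 3 * q3 * x^2))) (at x)"
    by (auto intro!: derivative_eq_intros simp: algebra_simps power2_eq_square)
  moreover have "exp (z * x) * z * (q0 + q1 * x + q2 * x^2 + q3 * x^3) + exp (z * x) * (q1 + 2 * q2 * x + 3 * q3 * x^2)
      = exp (z * x) * ((C0 + C1 * x) * (1 - x^2))"
    unfolding q0_def q1_def q2_def q3_def using assms
    by (simp add: field_simps power2_eq_square power3_eq_cube eval_nat_numeral)
  ultimately show ?thesis by (simp add: e)
qed

lemma kern_int:
  fixes C0 C1 :: complex and \<nu> :: real
  assumes "\<nu> \<noteq> 0"
  shows "((\<lambda>s. (C0 + C1 * of_real s) * of_real (1 - s^2) * exp (\<i> * of_real (\<nu> * s))) has_integral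
          (ant C0 C1 (\<i> * of_real \<nu>) 1 - ant C0 C1 (\<i> * of_real \<nu>) (-1))) {-1..1}"
proof -
  have z: "\<i> * complex_of_real \<nu> \<noteq> 0" using assms by simp
  have "((\<lambda>s. exp (\<i> * of_real \<nu> * of_real s) * ((C0 + C1 * of_real s) * (1 - (of_real s)^2))) has_integral
          (ant C0 C1 (\<i> * of_real \<nu>) (of_real 1) - ant C0 C1 (\<i> * of_real \<nu>) (of_real (-1)))) {-1..1}"
    by (rule fundamental_theorem_of_calculus)
       (auto intro!: has_vector_derivative_real_field ant_deriv z)
  then show ?thesis
    by (simp add: mult_ac)
qed

lemma norm_tail_bound:
  fixes q1 q2 q3 :: complex and \<nu> r :: real
  assumes "1 \<le> \<bar>\<nu>\<bar>"
  shows "norm (exp (\<i> * of_real \<nu> * of_real r) * (q1 / (\<i> * of_real \<nu>)^2 + q2 / (\<i> * of_real \<nu>)^3 + q3 / (\<i> * of_real \<nu>)^4))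
     \<le> (norm q1 + norm q2 + norm q3) / \<nu>^2"
proof -
  have e: "norm (exp (\<i> * of_real \<nu> * of_real r)) = 1"
    by (metis mult.assoc norm_exp_i_times of_real_mult)
  have n: "norm (\<i> * complex_of_real \<nu>) = \<bar>\<nu>\<bar>" by (simp add: norm_mult)
  have p2: "\<bar>\<nu>\<bar>^2 = \<nu>^2" by simp
  have b3: "norm q2 / \<bar>\<nu>\<bar>^3 \<le> norm q2 / \<nu>^2"
    using assms by (intro divide_left_mono) (auto simp: power_increasing[of 2 3 "\<bar>\<nu>\<bar>", simplified] )
  have b4: "norm q3 / \<bar>\<nu>\<bar>^4 \<le> norm q3 / \<nu>^2"
    using assms by (intro divide_left_mono) (auto simp: power_increasing[of 2 4 "\<bar>\<nu>\<bar>", simplified])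
  have "norm (q1 / (\<i> * of_real \<nu>)^2 + q2 / (\<i> * of_real \<nu>)^3 + q3 / (\<i> * of_real \<nu>)^4)
      \<le> norm q1 / \<bar>\<nu>\<bar>^2 + norm q2 / \<bar>\<nu>\<bar>^3 + norm q3 / \<bar>\<nu>\<bar>^4"
    using norm_triangle_ineq[of "q1 / (\<i> * of_real \<nu>)^2 + q2 / (\<i> * of_real \<nu>)^3" "q3 / (\<i> * of_real \<nu>)^4"]
          norm_triangle_ineq[of "q1 / (\<i> * of_real \<nu>)^2" "q2 / (\<i> * of_real \<nu>)^3"]
    by (simp add: norm_divide norm_power n)
  also have "\<dots> \<le> (norm q1 + norm q2 + norm q3) / \<nu>^2"
    using b3 b4 by (simp add: add_divide_distrib)
  finally show ?thesis by (simp add: norm_mult e)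
qed

lemma kern_bound:
  fixes C0 C1 :: complex and \<nu> :: real
  assumes "1 \<le> \<bar>\<nu>\<bar>"
  shows "norm (ant C0 C1 (\<i> * of_real \<nu>) 1 - ant C0 C1 (\<i> * of_real \<nu>) (-1)) \<le> (8 * norm C0 + 28 * norm C1) / \<nu>^2"
proof -
  let ?z = "\<i> * complex_of_real \<nu>"
  have a1: "ant C0 C1 ?z 1 = exp (?z * of_real 1) * ((2 * (C0 + C1)) / ?z^2 + (- 2 * C0 - 6 * C1) / ?z^3 + (6 * C1) / ?z^4)"
    unfolding ant_def by (simp add: algebra_simps diff_divide_distrib add_divide_distrib)
  have a2: "ant C0 C1 ?z (-1) = exp (?z * of_real (-1)) * ((-2 * (C0 - C1)) / ?z^2 + (- 2 * C0 + 6 * C1) / ?z^3 + (6 * C1) / ?z^4)"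
    unfolding ant_def by (simp add: algebra_simps diff_divide_distrib add_divide_distrib)
  have "norm (ant C0 C1 ?z 1) \<le> (norm (2 * (C0 + C1)) + norm (- 2 * C0 - 6 * C1) + norm (6 * C1)) / \<nu>^2"
    unfolding a1 by (rule norm_tail_bound[OF assms])
  also have "\<dots> \<le> (4 * norm C0 + 14 * norm C1) / \<nu>^2"
  proof (rule divide_right_mono)
    have "norm (2 * (C0 + C1)) \<le> 2 * norm C0 + 2 * norm C1"
      using norm_triangle_ineq[of C0 C1] unfolding norm_mult by simp
    moreover have "norm (- 2 * C0 - 6 * C1) \<le> 2 * norm C0 + 6 * norm C1"
      using norm_triangle_ineq4[of "- 2 * C0" "6 * C1"] unfolding norm_mult by simp
    moreover have "norm (6 * C1) = 6 * norm C1" by (simp add: norm_mult)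
    ultimately show "norm (2 * (C0 + C1)) + norm (- 2 * C0 - 6 * C1) + norm (6 * C1) \<le> 4 * norm C0 + 14 * norm C1"
      by linarith
  qed simp
  finally have n1: "norm (ant C0 C1 ?z 1) \<le> (4 * norm C0 + 14 * norm C1) / \<nu>^2" .
  have "norm (ant C0 C1 ?z (-1)) \<le> (norm (-2 * (C0 - C1)) + norm (- 2 * C0 + 6 * C1) + norm (6 * C1)) / \<nu>^2"
    unfolding a2 by (rule norm_tail_bound[OF assms])
  also have "\<dots> \<le> (4 * norm C0 + 14 * norm C1) / \<nu>^2"
  proof (rule divide_right_mono)
    have "norm (-2 * (C0 - C1)) \<le> 2 * norm C0 + 2 * norm C1"
      using norm_triangle_ineq4[of C0 C1] unfolding norm_mult by simp
    moreover have "norm (- 2 * C0 + 6 * C1) \<le> 2 * norm C0 + 6 * norm C1"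
      using norm_triangle_ineq[of "- 2 * C0" "6 * C1"] unfolding norm_mult by simp
    moreover have "norm (6 * C1) = 6 * norm C1" by (simp add: norm_mult)
    ultimately show "norm (-2 * (C0 - C1)) + norm (- 2 * C0 + 6 * C1) + norm (6 * C1) \<le> 4 * norm C0 + 14 * norm C1"
      by linarith
  qed simp
  finally have n2: "norm (ant C0 C1 ?z (-1)) \<le> (4 * norm C0 + 14 * norm C1) / \<nu>^2" .
  show ?thesis
    using norm_triangle_ineq4[of "ant C0 C1 ?z 1" "ant C0 C1 ?z (-1)"] n1 n2
    by (simp add: add_divide_distrib)
qed

lemma kern_zero:
  "((\<lambda>s. of_real (1 - s^2) * exp (\<i> * of_real (0 * s)) :: complex) has_integral (4/3)) {-1..1}"
proof -
  have d: "((\<lambda>z. z - z^3/3) has_field_derivative (1 - z^2)) (at z)" for z :: complex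
    by (auto intro!: derivative_eq_intros simp: power2_eq_square)
  have "((\<lambda>s. 1 - (complex_of_real s)^2) has_integral ((of_real 1 - (of_real 1)^3/3) - (of_real (-1) - (of_real (-1))^3/3))) {-1..1}"
    by (rule fundamental_theorem_of_calculus)
       (auto intro!: has_vector_derivative_real_field[OF d])
  then show ?thesis by simp
qed


lemma lim1: "((\<lambda>J::nat. ln (real (J+2)) powr a / real (J+2)) \<longlongrightarrow> 0) sequentially"
  by real_asymp

lemma lim2: "0 < c \<Longrightarrow> filterlim (\<lambda>J::nat. ln (real (J+2)) powr c) at_top sequentially"
  by real_asymp

lemma lam_sep:
  assumes "0 < b"
  shows "\<bar>real n - real J\<bar> * real (J+2) * ln (real (J+2)) powr b \<le> \<bar>lam b n - lam b J\<bar>"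
proof -
  define x where "x = real (J+2)"
  define y where "y = real (n+2)"
  have x2: "x \<ge> 2" "y \<ge> 2" unfolding x_def y_def by auto
  have d: "real n - real J = y - x" unfolding x_def y_def by simp
  have l: "lam b n = y^2 * ln y powr b" "lam b J = x^2 * ln x powr b" unfolding lam_def x_def y_def by auto
  show ?thesis
  proof (cases "y \<le> x")
    case True
    have "ln y powr b \<le> ln x powr b" using True x2 assms by (intro powr_mono2) auto
    then have "y^2 * ln y powr b \<le> y^2 * ln x powr b" by (intro mult_left_mono) auto
    moreover have "(x - y) * x \<le> x^2 - y^2" using True x2 by (simp add: power2_eq_square algebra_simps mult_left_mono)
    then have "(x - y) * x * ln x powr b \<le> (x^2 - y^2) * ln x powr b" by (intro mult_right_mono) auto
    ultimately show ?thesis using True unfolding d l x_def[symmetric] by (simp add: algebra_simps)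
  next
    case False
    have "ln x powr b \<le> ln y powr b" using False x2 assms by (intro powr_mono2) auto
    then have "y^2 * ln x powr b \<le> y^2 * ln y powr b" by (intro mult_left_mono) auto
    moreover have "(y - x) * x \<le> y^2 - x^2" using False x2 by (simp add: power2_eq_square algebra_simps mult_left_mono)
    then have "(y - x) * x * ln x powr b \<le> (y^2 - x^2) * ln x powr b" by (intro mult_right_mono) auto
    ultimately show ?thesis using False unfolding d l x_def[symmetric] by (simp add: algebra_simps)
  qed
qed

definition rr :: "nat \<Rightarrow> nat \<Rightarrow> real" where
  "rr J n = (if n = J then 0 else 1 / (real n - real J)^2)"

lemma inv_sq_le:
  fixes m :: real assumes "1 \<le> m" shows "1 / m^2 \<le> 2 / m - 2 / (m + 1)"
proof -
  have e: "2/m - 2/(m+1) = 2/(m*(m+1))" using assms by (simp add: field_simps)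
  have "m * (m + 1) \<le> 2 * m^2" using assms by (simp add: power2_eq_square algebra_simps)
  then have "1 / m^2 \<le> 2 / (m * (m+1))" using assms
    by (simp add: divide_simps)
  then show ?thesis using e by simp
qed

lemma rr_partial:
  "(\<Sum>n<N. rr J n) \<le> (if N \<le> J then 2 / (real J - real N + 1) - 2 / (real J + 1) else 4 - 2 / (real N - real J))"
proof (induction N)
  case 0 then show ?case by simp
next
  case (Suc N)
  show ?case
  proof (cases "Suc N \<le> J")
    case True
    then have r: "rr J N = 1 / (real J - real N)^2" unfolding rr_def by (simp add: power2_commute)
    have "1 / (real J - real N)^2 \<le> 2 / (real J - real N) - 2 / (real J - real N + 1)"
      using True by (intro inv_sq_le) auto
    then show ?thesis using Suc True r by (simp add: of_nat_diff)
  next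
    case False
    show ?thesis
    proof (cases "N = J")
      case True
      have z: "0 \<le> 2 / (real J + 1)" by simp
      have e: "sum (rr J) {..<Suc N} = sum (rr J) {..<N}" using True by (simp add: rr_def)
      have "sum (rr J) {..<N} \<le> 2 / (real J - real N + 1) - 2 / (real J + 1)" using Suc.IH True by simp
      moreover have "2 / (real J - real N + 1) = 2" using True by simp
      ultimately have "sum (rr J) {..<Suc N} \<le> 2" using e z by linarith
      then show ?thesis using True False by simp
    next
      case False2: False
      with False have NJ: "J < N" by simp
      then have r: "rr J N = 1 / (real N - real J)^2" unfolding rr_def by simp
      have "1 / (real N - real J)^2 \<le> 2 / (real N - real J) - 2 / (real N - real J + 1)"
        using NJ by (intro inv_sq_le) auto
      then show ?thesis using Suc NJ r by (simp add: algebra_simps)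
    qed
  qed
qed

lemma rr_nonneg: "0 \<le> rr J n" unfolding rr_def by simp

lemma rr_sum_le: "(\<Sum>n<N. rr J n) \<le> 4"
proof -
  have p: "(\<Sum>n<N. rr J n) \<le> (if N \<le> J then 2 / (real J - real N + 1) - 2 / (real J + 1) else 4 - 2 / (real N - real J))"
    by (rule rr_partial)
  then show ?thesis
  proof (cases "N \<le> J")
    case True
    have "2 / (real J - real N + 1) \<le> 2" using True by (simp add: field_simps)
    moreover have "0 \<le> 2 / (real J + 1)" by simp
    moreover have "(\<Sum>n<N. rr J n) \<le> 2 / (real J - real N + 1) - 2 / (real J + 1)" using p True by simp
    ultimately show ?thesis by linarith
  next
    case False
    have "0 \<le> 2 / (real N - real J)" using False by simp
    moreover have "(\<Sum>n<N. rr J n) \<le> 4 - 2 / (real N - real J)" using p False by simp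
    ultimately show ?thesis by linarith
  qed
qed

lemma rr_summable: "summable (rr J)"
  by (rule summableI_nonneg_bounded[of _ 4]) (auto intro: rr_nonneg rr_sum_le)

lemma rr_suminf: "suminf (rr J) \<le> 4"
  by (rule suminf_le_const[OF rr_summable rr_sum_le])



lemma pointwise:
  assumes "0 < a" "2 \<le> J" "n \<noteq> J"
  shows "1 / ((real n - real J)^2 * ww a n) \<le> (2 * 2 powr a) / ww a J * rr J n + 4 / real (J+2)^2 * (1 / ww a n)"
proof -
  define x where "x = real (J+2)"
  define y where "y = real (n+2)"
  have x4: "x \<ge> 4" "y \<ge> 2" unfolding x_def y_def using assms by auto
  have d: "real n - real J = y - x" unfolding x_def y_def by simp
  have dpos: "0 < (y - x)^2" using assms unfolding x_def y_def by simp
  have rr: "rr J n = 1 / (y - x)^2" unfolding rr_def d using assms by simp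
  have w: "ww a n = y * ln y powr a" "ww a J = x * ln x powr a" unfolding ww_def x_def y_def by auto
  have lx: "ln x > 0" "ln y > 0" using x4 by auto
  have wp: "0 < ww a n" "0 < ww a J" by (rule ww_pos)+
  have A1: "0 \<le> (2 * 2 powr a) / ww a J * rr J n" using wp by (simp add: rr)
  have A2: "0 \<le> 4 / real (J+2)^2 * (1 / ww a n)" using wp by simp
  show ?thesis
  proof (cases "y \<ge> x / 2")
    case True
    have "ln 4 \<le> ln x" using x4 by simp
    moreover have "ln (4::real) = 2 * ln 2" using ln_realpow[of 2 2] by simp
    moreover have "ln (x/2) \<le> ln y" using True x4 by simp
    moreover have "ln (x/2) = ln x - ln 2" using x4 by (simp add: ln_div)
    ultimately have ly: "ln x / 2 \<le> ln y" by linarith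
    have "(ln x / 2) powr a \<le> ln y powr a" using ly lx assms by (intro powr_mono2) auto
    moreover have "(ln x / 2) powr a = ln x powr a / 2 powr a" using lx by (simp add: powr_divide)
    ultimately have "ln x powr a / 2 powr a \<le> ln y powr a" by simp
    then have m: "(x/2) * (ln x powr a / 2 powr a) \<le> y * ln y powr a"
      using True x4 by (intro mult_mono) auto
    have e: "(x/2) * (ln x powr a / 2 powr a) = ww a J / (2 * 2 powr a)" unfolding w by simp
    have wle: "ww a J / (2 * 2 powr a) \<le> ww a n" using m unfolding e w(1) .
    have pos: "0 < (y-x)^2 * (ww a J / (2 * 2 powr a))" using dpos wp by simp
    have pos2: "0 < (y-x)^2 * ww a n" using dpos wp by simp
    have le: "(y-x)^2 * (ww a J / (2 * 2 powr a)) \<le> (y-x)^2 * ww a n"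
      by (rule mult_left_mono[OF wle]) simp
    have "1 / ((y-x)^2 * ww a n) \<le> 1 / ((y-x)^2 * (ww a J / (2 * 2 powr a)))"
      by (rule divide_left_mono[OF le]) (use mult_pos_pos[OF pos2 pos] in auto)
    also have "\<dots> = (2 * 2 powr a) / ww a J * rr J n" unfolding rr by simp
    finally show ?thesis unfolding d using A2 by linarith
  next
    case False
    then have "x/2 \<le> x - y" by simp
    then have "(x/2)^2 \<le> (x - y)^2" by (rule power_mono) (use x4 in simp)
    then have sq: "x^2 / 4 \<le> (y - x)^2" by (simp add: power2_commute power_divide)
    have pos: "0 < x^2 / 4 * ww a n" using x4 wp by simp
    have pos2: "0 < (y-x)^2 * ww a n" using dpos wp by simp
    have le: "x^2/4 * ww a n \<le> (y-x)^2 * ww a n"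
      by (rule mult_right_mono[OF sq]) (use wp in simp)
    have "1 / ((y-x)^2 * ww a n) \<le> 1 / (x^2/4 * ww a n)"
      by (rule divide_left_mono[OF le]) (use mult_pos_pos[OF pos2 pos] in auto)
    also have "\<dots> = 4 / x^2 * (1 / ww a n)" by simp
    finally show ?thesis unfolding d x_def[symmetric] using A1 by linarith
  qed
qed



definition Kv :: "real \<Rightarrow> complex" where
  "Kv \<nu> = (if \<nu> = 0 then 4/3 else ant 1 0 (\<i> * of_real \<nu>) 1 - ant 1 0 (\<i> * of_real \<nu>) (-1))"

lemma K_int: "((\<lambda>s. of_real (1 - s^2) * exp (\<i> * of_real (\<nu> * s))) has_integral Kv \<nu>) {-1..1}"
proof (cases "\<nu> = 0")
  case True then show ?thesis using kern_zero by (simp add: Kv_def)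
next
  case False
  show ?thesis using kern_int[OF False, of 1 0] False by (simp add: Kv_def)
qed

lemma K_bound: "1 \<le> \<bar>\<nu>\<bar> \<Longrightarrow> norm (Kv \<nu>) \<le> 8 / \<nu>^2"
  using kern_bound[of \<nu> 1 0] by (auto simp: Kv_def)

lemma exp_ii: "exp (\<i> * of_real p) * exp (\<i> * of_real q) = exp (\<i> * of_real (p + q))"
  by (simp add: exp_add[symmetric] distrib_left)

lemma norm_c: "norm A \<le> 1 \<Longrightarrow> norm (A * exp (\<i> * of_real p) / of_real (ww a n)) \<le> 1 / ww a n"
  using ww_pos[of a n] by (simp add: norm_mult norm_divide divide_right_mono)


lemma abs_1_sq:
  fixes s :: real assumes "\<bar>s\<bar> \<le> 1" shows "\<bar>1 - s^2\<bar> \<le> 1"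
proof -
  have "s^2 \<le> 1" using assms by (simp add: abs_square_le_1)
  moreover have "0 \<le> s^2" by simp
  ultimately have "\<bar>1 - s^2\<bar> = 1 - s^2" by simp
  then show ?thesis by simp
qed

lemma core:
  fixes a b \<theta> K \<epsilon> :: real and A B D :: complex and t0 :: real and J :: nat
  assumes a: "1 < a" "a \<le> b"
    and AB: "1/2 \<le> norm A" "norm A \<le> 1" "norm B \<le> 1"
    and th: "0 < \<theta>" "\<theta> \<le> 1" "32 * (2 * 2 powr a) * \<theta>^2 = 1/6"
    and J2: "2 \<le> J"
    and big: "1 \<le> \<theta> * real (J+2)"
    and Kdef: "K = 40 * (\<Sum>n. 1 / ww a n) + 8 * norm (Hg a b A B t0) + 28 * norm D"
    and cond: "6 * \<theta>^2 * K * ln (real (J+2)) powr a \<le> real (J+2)"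
    and hyp: "\<And>u. \<bar>u\<bar> \<le> 1 / (\<theta> * real (J+2) * ln (real (J+2)) powr b) \<Longrightarrow>
               norm (Hg a b A B (t0 + u) - Hg a b A B t0 - D * of_real u) \<le> \<epsilon> * \<bar>u\<bar>"
  shows "\<theta> * ln (real (J+2)) powr (b - a) \<le> 6 * \<epsilon>"
proof -
  define H where "H = Hg a b A B"
  define x where "x = real (J+2)"
  define L where "L = ln x"
  define \<delta> where "\<delta> = \<theta> * x * L powr b"
  define \<mu> where "\<mu> = x / \<theta>"
  define M where "M = 2 * 2 powr a"
  define S where "S = (\<Sum>n. 1 / ww a n)"
  have x4: "4 \<le> x" using J2 unfolding x_def by simp
  have L1: "1 < L"
  proof -
    have "exp 1 < x" using exp_le x4 by linarith
    then have "ln (exp 1) < ln x" using x4 by (subst ln_less_cancel_iff) auto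
    then show ?thesis unfolding L_def by simp
  qed
  have Lb: "1 \<le> L powr b" using L1 a by (simp add: ge_one_powr_ge_zero less_imp_le)
  have dpos: "0 < \<delta>" unfolding \<delta>_def using th(1,2) x4 L1 by simp
  have d1: "1 \<le> \<delta>"
  proof -
    have "\<theta> * x * 1 \<le> \<theta> * x * L powr b" using Lb th(1,2) x4 by (intro mult_left_mono) auto
    then show ?thesis using big unfolding \<delta>_def x_def by simp
  qed
  have lamJ: "lam b J = \<mu> * \<delta>" unfolding lam_def \<mu>_def \<delta>_def x_def L_def using th(1,2)
    by (simp add: power2_eq_square)
  have mu1: "1 \<le> \<mu>" unfolding \<mu>_def using th(1,2) x4 by (simp add: field_simps)
  have wJ: "ww a J = x * L powr a" unfolding ww_def x_def L_def by simp
  have ratio: "\<delta> / ww a J = \<theta> * L powr (b - a)"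
    unfolding \<delta>_def wJ using x4 L1 by (simp add: powr_diff)
  define \<Psi> where "\<Psi> s = of_real (1 - s^2) * exp (\<i> * of_real (-\<mu> * s)) * (H (t0 + s/\<delta>) - H t0 - D * of_real (s/\<delta>))" for s
  define c1 where "c1 n = A * exp (\<i> * of_real (t0 * lam b n)) / of_real (ww a n)" for n
  define c2 where "c2 n = B * exp (\<i> * of_real (- (t0 * lam b n))) / of_real (ww a n)" for n
  define \<nu>1 where "\<nu>1 n = (lam b n - lam b J) / \<delta>" for n
  define \<nu>2 where "\<nu>2 n = (- lam b n - lam b J) / \<delta>" for n
  define G where "G n = c1 n * Kv (\<nu>1 n) + c2 n * Kv (\<nu>2 n)" for n
  define g where "g n s = of_real (1 - s^2) * exp (\<i> * of_real (-\<mu> * s)) * tm a b A B (t0 + s/\<delta>) n" for n s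
  have g_eq: "g n s = c1 n * (of_real (1 - s^2) * exp (\<i> * of_real (\<nu>1 n * s)))
                    + c2 n * (of_real (1 - s^2) * exp (\<i> * of_real (\<nu>2 n * s)))" for n s
  proof -
    have e1: "exp (\<i> * of_real (-\<mu> * s)) * exp (\<i> * of_real ((t0 + s/\<delta>) * lam b n))
        = exp (\<i> * of_real (t0 * lam b n)) * exp (\<i> * of_real (\<nu>1 n * s))"
      unfolding exp_ii \<nu>1_def lamJ using dpos by (simp add: field_simps)
    have e2: "exp (\<i> * of_real (-\<mu> * s)) * exp (\<i> * of_real (- ((t0 + s/\<delta>) * lam b n)))
        = exp (\<i> * of_real (- (t0 * lam b n))) * exp (\<i> * of_real (\<nu>2 n * s))"
    proof -
      have r: "-\<mu> * s + - ((t0 + s/\<delta>) * lam b n) = - (t0 * lam b n) + \<nu>2 n * s"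
        unfolding \<nu>2_def lamJ using dpos by (simp add: field_simps)
      show ?thesis unfolding exp_ii r ..
    qed
    have "g n s = of_real (1 - s^2) * (A * (exp (\<i> * of_real (-\<mu> * s)) * exp (\<i> * of_real ((t0 + s/\<delta>) * lam b n)))
        + B * (exp (\<i> * of_real (-\<mu> * s)) * exp (\<i> * of_real (- ((t0 + s/\<delta>) * lam b n))))) / of_real (ww a n)"
      unfolding g_def tm_def by (simp add: algebra_simps)
    also have "\<dots> = c1 n * (of_real (1 - s^2) * exp (\<i> * of_real (\<nu>1 n * s)))
                    + c2 n * (of_real (1 - s^2) * exp (\<i> * of_real (\<nu>2 n * s)))"
      unfolding e1 e2 c1_def c2_def using ww_pos[of a n] by (simp add: field_simps)
    finally show ?thesis .
  qed
  have g_int: "(g n has_integral G n) {-1..1}" for n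
    unfolding g_eq G_def by (intro has_integral_add has_integral_mult_right K_int)
  have summ_tm: "summable (tm a b A B t)" for t using summable_tm[OF a(1) AB(2,3)] .
  have gbound: "norm (g n s) \<le> 2 / ww a n" if "s \<in> {-1..1}" for n s
  proof -
    have "\<bar>1 - s^2\<bar> \<le> 1" using that by (intro abs_1_sq) auto
    then have "norm (g n s) \<le> 1 * 1 * (2 / ww a n)"
      unfolding g_def norm_mult norm_of_real using norm_tm[OF AB(2,3), of a b "t0 + s/\<delta>" n]
      by (intro mult_mono) (auto simp del: of_real_diff of_real_power)
    then show ?thesis by simp
  qed
  have unif: "uniform_limit {-1..1} (\<lambda>N s. \<Sum>n<N. g n s) (\<lambda>s. \<Sum>n. g n s) sequentially"
    by (rule Weierstrass_m_test[OF gbound summable_2ww[OF a(1)]])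
  have gcont: "continuous_on {-1..1} (\<lambda>s. \<Sum>n<N. g n s)" for N
    unfolding g_def tm_def using dpos ww_pos[of a]
    by (intro continuous_intros) (auto simp: less_imp_neq[symmetric])
  obtain I Jl where I: "\<And>N. ((\<lambda>s. \<Sum>n<N. g n s) has_integral I N) {-1..1}"
      and Jl: "((\<lambda>s. \<Sum>n. g n s) has_integral Jl) {-1..1}" and IJ: "I \<longlonglongrightarrow> Jl"
    using uniform_limit_integral[OF unif gcont] by auto
  have "I N = (\<Sum>n<N. G n)" for N
    using has_integral_unique[OF I[of N] has_integral_sum[of "{..<N}" g G, OF _ g_int]] by simp
  then have "I = (\<lambda>N. \<Sum>n<N. G n)" by (intro ext)
  then have Gsums: "G sums Jl" using IJ unfolding sums_def by simp
  have gsum: "(\<Sum>n. g n s) = of_real (1 - s^2) * exp (\<i> * of_real (-\<mu> * s)) * H (t0 + s/\<delta>)" for s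
    unfolding g_def H_def Hg_def by (rule suminf_mult[OF summ_tm])
  define C0 where "C0 = H t0"
  define C1 where "C1 = D / of_real \<delta>"
  define V0 where "V0 = ant C0 C1 (\<i> * of_real (-\<mu>)) 1 - ant C0 C1 (\<i> * of_real (-\<mu>)) (-1)"
  have V0int: "((\<lambda>s. (C0 + C1 * of_real s) * of_real (1 - s^2) * exp (\<i> * of_real (-\<mu> * s))) has_integral V0) {-1..1}"
    unfolding V0_def using kern_int[of "-\<mu>" C0 C1] mu1 by simp
  have Psi_eq: "\<Psi> s = (\<Sum>n. g n s) - (C0 + C1 * of_real s) * of_real (1 - s^2) * exp (\<i> * of_real (-\<mu> * s))" for s
    unfolding gsum \<Psi>_def C0_def C1_def using dpos by (simp add: algebra_simps)
  have Psi_int: "(\<Psi> has_integral (Jl - V0)) {-1..1}"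
    unfolding Psi_eq[abs_def] by (rule has_integral_diff[OF Jl V0int])
  have eps0: "0 \<le> \<epsilon>"
  proof -
    have "norm (H (t0 + 1/\<delta>) - H t0 - D * of_real (1/\<delta>)) \<le> \<epsilon> * \<bar>1/\<delta>\<bar>"
      using hyp[of "1/\<delta>"] dpos unfolding H_def \<delta>_def x_def L_def by simp
    moreover have "\<bar>1/\<delta>\<bar> = 1/\<delta>" using dpos by simp
    moreover have "0 \<le> norm (H (t0 + 1/\<delta>) - H t0 - D * of_real (1/\<delta>))" by simp
    ultimately have "0 \<le> \<epsilon> * (1/\<delta>)" by linarith
    then show ?thesis using dpos by (simp add: zero_le_divide_iff)
  qed
  have upper: "norm (Jl - V0) \<le> 2 * \<epsilon> / \<delta>"
  proof -
    have "norm (Jl - V0) \<le> \<epsilon> / \<delta> * measure lborel (cbox (-1::real) 1)"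
    proof (rule has_integral_bound[of "\<epsilon> / \<delta>" \<Psi>])
      show "0 \<le> \<epsilon> / \<delta>" using eps0 dpos by simp
      show "(\<Psi> has_integral Jl - V0) (cbox (- 1) 1)" using Psi_int by simp
      fix s :: real assume "s \<in> cbox (-1) 1"
      then have s: "\<bar>s\<bar> \<le> 1" by auto
      have s2: "\<bar>1 - s^2\<bar> \<le> 1" using s by (rule abs_1_sq)
      have su: "\<bar>s/\<delta>\<bar> \<le> 1/\<delta>" using s dpos by (simp add: divide_right_mono)
      have "norm (H (t0 + s/\<delta>) - H t0 - D * of_real (s/\<delta>)) \<le> \<epsilon> * \<bar>s/\<delta>\<bar>"
        using hyp[of "s/\<delta>"] su unfolding H_def \<delta>_def x_def L_def by simp
      also have "\<dots> \<le> \<epsilon> * (1/\<delta>)" using su eps0 by (intro mult_left_mono) auto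
      finally have h: "norm (H (t0 + s/\<delta>) - H t0 - D * of_real (s/\<delta>)) \<le> \<epsilon> / \<delta>" by simp
      have "norm (\<Psi> s) = \<bar>1 - s^2\<bar> * norm (H (t0 + s/\<delta>) - H t0 - D * of_real (s/\<delta>))"
        unfolding \<Psi>_def norm_mult by (simp del: of_real_diff)
      also have "\<dots> \<le> 1 * (\<epsilon> / \<delta>)" using s2 h by (intro mult_mono) auto
      finally show "norm (\<Psi> s) \<le> \<epsilon> / \<delta>" by simp
    qed
    then show ?thesis by (simp add: mult.commute)
  qed
  have lower: "1 / (3 * ww a J) \<le> norm (Jl - V0)"
  proof -
    have wJp: "0 < ww a J" by (rule ww_pos)
    define P where "P = c1 J * (4/3)"
    have nP: "2 / (3 * ww a J) \<le> norm P"
    proof -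
      have "norm P = norm A * (4/3) / ww a J"
        unfolding P_def c1_def using wJp by (simp add: norm_mult norm_divide)
      then show ?thesis using AB(1) wJp by (simp add: field_simps)
    qed
    define E where "E n = G n - (if n = J then P else 0)" for n
    have Esums: "E sums (Jl - P)"
      unfolding E_def by (rule sums_diff[OF Gsums]) (rule sums_single[of J "\<lambda>_. P", simplified])
    define bnd where "bnd n = 8 * \<theta>^2 * (if n = J then 0 else 1 / ((real n - real J)^2 * ww a n))
                              + 8 * \<theta>^2 / x^2 * (1 / ww a n)" for n
    define bnd2 where "bnd2 n = (8 * \<theta>^2 * M / ww a J) * rr J n + (40 * \<theta>^2 / x^2) * (1 / ww a n)" for n
    have nu2: "8 / (\<nu>2 n)^2 \<le> 8 * \<theta>^2 / x^2" for n
    proof -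
      have "0 \<le> lam b n" unfolding lam_def by simp
      then have "\<mu> \<le> \<bar>\<nu>2 n\<bar>" unfolding \<nu>2_def using dpos lamJ
        by (simp add: field_simps abs_div)
      then have "\<mu>^2 \<le> (\<nu>2 n)^2" using mu1 by (metis abs_le_square_iff abs_of_nonneg order_trans zero_le_one)
      moreover have p1: "0 < \<mu>^2" using mu1 by simp
      ultimately have p2: "0 < (\<nu>2 n)^2" by linarith
      have "8 / (\<nu>2 n)^2 \<le> 8 / \<mu>^2"
        by (rule divide_left_mono[OF \<open>\<mu>^2 \<le> (\<nu>2 n)^2\<close> _ mult_pos_pos[OF p2 p1]]) simp
      also have "8 / \<mu>^2 = 8 * \<theta>^2 / x^2" unfolding \<mu>_def by (simp add: power_divide)
      finally show ?thesis .
    qed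
    have nu2b: "norm (c2 n * Kv (\<nu>2 n)) \<le> 8 * \<theta>^2 / x^2 * (1 / ww a n)" for n
    proof -
      have "\<mu> \<le> \<bar>\<nu>2 n\<bar>"
      proof -
        have "0 \<le> lam b n" unfolding lam_def by simp
        then show ?thesis unfolding \<nu>2_def using dpos lamJ by (simp add: field_simps abs_div)
      qed
      then have "1 \<le> \<bar>\<nu>2 n\<bar>" using mu1 by simp
      then have "norm (Kv (\<nu>2 n)) \<le> 8 * \<theta>^2 / x^2" using K_bound nu2 order_trans by blast
      moreover have "norm (c2 n) \<le> 1 / ww a n" unfolding c2_def by (rule norm_c[OF AB(3)])
      ultimately show ?thesis unfolding norm_mult
        by (smt (verit, ccfv_SIG) mult.commute mult_mono norm_ge_zero)
    qed
    have nu1b: "norm (c1 n * Kv (\<nu>1 n)) \<le> 8 * \<theta>^2 * (1 / ((real n - real J)^2 * ww a n))" if "n \<noteq> J" for n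
    proof -
      have sep: "\<bar>real n - real J\<bar> * x * L powr b \<le> \<bar>lam b n - lam b J\<bar>"
        using lam_sep[of b n J] a unfolding x_def L_def by simp
      have "\<bar>real n - real J\<bar> / \<theta> \<le> \<bar>\<nu>1 n\<bar>"
      proof -
        have "\<bar>real n - real J\<bar> / \<theta> = \<bar>real n - real J\<bar> * x * L powr b / \<delta>"
          unfolding \<delta>_def using th(1,2) x4 L1 by (simp add: field_simps)
        also have "\<dots> \<le> \<bar>lam b n - lam b J\<bar> / \<delta>" using sep dpos by (simp add: divide_right_mono)
        finally show ?thesis unfolding \<nu>1_def using dpos by (simp add: abs_div)
      qed
      moreover have nj1: "1 \<le> \<bar>real n - real J\<bar>" using that by linarith
      moreover have "1 \<le> \<bar>real n - real J\<bar> / \<theta>" using th(1,2) nj1 by (simp add: field_simps)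
      ultimately have n1: "1 \<le> \<bar>\<nu>1 n\<bar>" and n2: "(\<bar>real n - real J\<bar> / \<theta>)^2 \<le> (\<nu>1 n)^2"
        by (auto intro: order_trans) (metis abs_le_square_iff abs_of_nonneg order_trans zero_le_one)
      have "norm (Kv (\<nu>1 n)) \<le> 8 / (\<nu>1 n)^2" by (rule K_bound[OF n1])
      also have "\<dots> \<le> 8 / (\<bar>real n - real J\<bar> / \<theta>)^2"
      proof -
        have q1: "0 < (\<bar>real n - real J\<bar> / \<theta>)^2" using nj1 th(1) by simp
        have q2: "0 < (\<nu>1 n)^2" using q1 n2 by linarith
        show ?thesis by (rule divide_left_mono[OF n2 _ mult_pos_pos[OF q2 q1]]) simp
      qed
      also have "\<dots> = 8 * \<theta>^2 / (real n - real J)^2" using th(1,2) by (simp add: power_divide)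
      finally have k: "norm (Kv (\<nu>1 n)) \<le> 8 * \<theta>^2 / (real n - real J)^2" .
      moreover have "norm (c1 n) \<le> 1 / ww a n" unfolding c1_def by (rule norm_c[OF AB(2)])
      ultimately have "norm (c1 n * Kv (\<nu>1 n)) \<le> 1 / ww a n * (8 * \<theta>^2 / (real n - real J)^2)"
        unfolding norm_mult using ww_pos[of a n] by (intro mult_mono) auto
      then show ?thesis by (simp add: field_simps)
    qed
    have Ebnd: "norm (E n) \<le> bnd n" for n
    proof (cases "n = J")
      case True
      have "\<nu>1 J = 0" unfolding \<nu>1_def by simp
      then have "E n = c2 J * Kv (\<nu>2 J)" unfolding E_def G_def P_def True by (simp add: Kv_def)
      then show ?thesis unfolding bnd_def using nu2b[of J] True by simp
    next
      case False
      have "norm (E n) \<le> norm (c1 n * Kv (\<nu>1 n)) + norm (c2 n * Kv (\<nu>2 n))"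
        unfolding E_def G_def using False norm_triangle_ineq by simp
      then show ?thesis unfolding bnd_def using nu1b[OF False] nu2b[of n] False by simp
    qed
    have bnd_le: "bnd n \<le> bnd2 n" for n
    proof (cases "n = J")
      case True
      have "8 * \<theta>^2 / x^2 * (1 / ww a J) \<le> 40 * \<theta>^2 / x^2 * (1 / ww a J)"
        using wJp by (intro mult_right_mono divide_right_mono) auto
      then show ?thesis unfolding bnd_def bnd2_def using True by (simp add: rr_def)
    next
      case False
      have p: "1 / ((real n - real J)^2 * ww a n) \<le> M / ww a J * rr J n + 4 / x^2 * (1 / ww a n)"
        using pointwise[of a J n] a J2 False unfolding M_def x_def by simp
      have "bnd n \<le> 8 * \<theta>^2 * (M / ww a J * rr J n + 4 / x^2 * (1 / ww a n)) + 8 * \<theta>^2 / x^2 * (1 / ww a n)"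
      proof -
        have "8 * \<theta>^2 * (1 / ((real n - real J)^2 * ww a n)) \<le> 8 * \<theta>^2 * (M / ww a J * rr J n + 4 / x^2 * (1 / ww a n))"
          using p by (intro mult_left_mono) auto
        then show ?thesis unfolding bnd_def using False by simp
      qed
      also have "\<dots> = bnd2 n" unfolding bnd2_def by (simp add: field_simps)
      finally show ?thesis .
    qed
    have sumw: "summable (\<lambda>n. 1 / ww a n)" by (rule summable_ww[OF a(1)])
    have sb2: "summable bnd2" unfolding bnd2_def
      by (intro summable_add summable_mult rr_summable sumw)
    have bnd0: "0 \<le> bnd n" for n unfolding bnd_def using ww_pos[of a n] by simp
    have sb: "summable bnd" by (rule summable_comparison_test[OF _ sb2]) (use bnd0 bnd_le in auto)
    have sE: "summable (\<lambda>n. norm (E n))" by (rule summable_comparison_test[OF _ sb]) (use Ebnd in auto)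
    have "norm (Jl - P) \<le> (\<Sum>n. norm (E n))"
      using summable_norm[OF sE] sums_unique[OF Esums] by simp
    also have "\<dots> \<le> suminf bnd2"
      by (rule suminf_le[OF _ sE sb2]) (use Ebnd bnd_le order_trans in blast)
    also have "suminf bnd2 = (8 * \<theta>^2 * M / ww a J) * suminf (rr J) + (40 * \<theta>^2 / x^2) * S"
    proof -
      have "bnd2 sums ((8 * \<theta>^2 * M / ww a J) * suminf (rr J) + (40 * \<theta>^2 / x^2) * S)"
        unfolding bnd2_def S_def
        by (intro sums_add sums_mult summable_sums rr_summable sumw)
      then show ?thesis by (rule sums_unique[symmetric])
    qed
    also have "\<dots> \<le> (8 * \<theta>^2 * M / ww a J) * 4 + (40 * \<theta>^2 / x^2) * S"
      using rr_suminf[of J] th(1,2) wJp unfolding M_def by (intro add_right_mono mult_left_mono) auto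
    also have "(8 * \<theta>^2 * M / ww a J) * 4 = 1 / (6 * ww a J)"
    proof -
      have e: "8 * \<theta>^2 * M * 4 = 1/6" using th(3) unfolding M_def by (simp add: algebra_simps)
      have "(8 * \<theta>^2 * M / ww a J) * 4 = (8 * \<theta>^2 * M * 4) / ww a J" by simp
      also have "\<dots> = (1/6) / ww a J" by (simp only: e)
      finally show ?thesis by simp
    qed
    finally have nJP: "norm (Jl - P) \<le> 1 / (6 * ww a J) + 40 * \<theta>^2 / x^2 * S" by simp
    have nV0: "norm V0 \<le> (8 * norm C0 + 28 * norm D) * \<theta>^2 / x^2"
    proof -
      have k: "norm V0 \<le> (8 * norm C0 + 28 * norm C1) / (-\<mu>)^2"
        unfolding V0_def by (rule kern_bound) (use mu1 in simp)
      have c1: "norm C1 \<le> norm D" unfolding C1_def using d1 dpos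
        by (simp add: norm_divide divide_le_eq mult_le_cancel_left1 norm_ge_zero)
      have "(8 * norm C0 + 28 * norm C1) / \<mu>^2 \<le> (8 * norm C0 + 28 * norm D) / \<mu>^2"
        using c1 by (intro divide_right_mono) auto
      also have "\<dots> = (8 * norm C0 + 28 * norm D) * \<theta>^2 / x^2" unfolding \<mu>_def by (simp add: power_divide)
      finally show ?thesis using k by simp
    qed
    have Kge: "40 * \<theta>^2 / x^2 * S + (8 * norm C0 + 28 * norm D) * \<theta>^2 / x^2 = \<theta>^2 * K / x^2"
      unfolding Kdef S_def C0_def H_def using x4 by (simp add: field_simps)
    have "\<theta>^2 * K / x^2 \<le> 1 / (6 * ww a J)"
    proof -
      have "6 * \<theta>^2 * K * L powr a \<le> x" using cond unfolding x_def L_def by simp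
      then have "\<theta>^2 * K * (6 * x * L powr a) \<le> x^2" using x4 by (simp add: power2_eq_square algebra_simps mult_right_mono)
      then show ?thesis using x4 L1 unfolding wJ by (simp add: field_simps)
    qed
    then have "norm (Jl - P) + norm V0 \<le> 1 / (3 * ww a J)" using nJP nV0 Kge by (simp add: field_simps)
    moreover have "norm P \<le> norm (Jl - V0) + norm (Jl - P) + norm V0"
    proof -
      have e: "P = (Jl - V0) - (Jl - P) + V0" by simp
      have "norm P \<le> norm ((Jl - V0) - (Jl - P)) + norm V0"
        by (subst e) (rule norm_triangle_ineq)
      moreover have "norm ((Jl - V0) - (Jl - P)) \<le> norm (Jl - V0) + norm (Jl - P)"
        by (rule norm_triangle_ineq4)
      ultimately show ?thesis by linarith
    qed
    ultimately show ?thesis using nP by (simp add: field_simps)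
  qed
  have "1 / (3 * ww a J) \<le> 2 * \<epsilon> / \<delta>" using upper lower by linarith
  then have "\<delta> / ww a J \<le> 6 * \<epsilon>" using dpos ww_pos[of a J] by (simp add: field_simps)
  then show ?thesis unfolding ratio L_def x_def .
qed



lemma diff_eps:
  fixes f :: "real \<Rightarrow> 'a::real_normed_vector"
  assumes "f differentiable (at t)"
  shows "\<exists>D. \<forall>e>0. \<exists>d>0. \<forall>u. \<bar>u\<bar> < d \<longrightarrow> norm (f (t + u) - f t - u *\<^sub>R D) \<le> e * \<bar>u\<bar>"
proof -
  from assms have "(f has_vector_derivative vector_derivative f (at t)) (at t)"
    using vector_derivative_works by blast
  then have "(f has_derivative (\<lambda>h. h *\<^sub>R vector_derivative f (at t))) (at t within UNIV)"
    unfolding has_vector_derivative_def by simp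
  then have h: "\<forall>e>0. \<exists>d>0. \<forall>y. norm (y - t) < d \<longrightarrow>
      norm (f y - f t - (y - t) *\<^sub>R vector_derivative f (at t)) \<le> e * norm (y - t)"
    unfolding has_derivative_within_alt by auto
  show ?thesis
  proof (rule exI[of _ "vector_derivative f (at t)"], intro allI impI)
    fix e :: real assume "0 < e"
    then obtain d where d: "d > 0" "\<forall>y. norm (y - t) < d \<longrightarrow>
      norm (f y - f t - (y - t) *\<^sub>R vector_derivative f (at t)) \<le> e * norm (y - t)" using h by blast
    show "\<exists>d>0. \<forall>u. \<bar>u\<bar> < d \<longrightarrow> norm (f (t + u) - f t - u *\<^sub>R vector_derivative f (at t)) \<le> e * \<bar>u\<bar>"
      using d by (intro exI[of _ d]) (auto dest: spec[of _ "t + _"])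
  qed
qed

definition theta :: "real \<Rightarrow> real" where "theta a = 1 / sqrt (384 * 2 powr a)"

lemma theta_props:
  assumes "1 < a"
  shows "0 < theta a" "theta a \<le> 1" "32 * (2 * 2 powr a) * (theta a)^2 = 1/6"
proof -
  have p: "1 \<le> 2 powr a" using assms by (intro ge_one_powr_ge_zero) auto
  show "0 < theta a" unfolding theta_def by simp
  have "1 \<le> sqrt (384 * 2 powr a)" using p by simp
  then show "theta a \<le> 1" unfolding theta_def by simp
  have "(theta a)^2 = 1 / (384 * 2 powr a)" unfolding theta_def
    by (simp add: power_divide)
  then show "32 * (2 * 2 powr a) * (theta a)^2 = 1/6" by simp
qed

lemma ln_ge1: "3 \<le> x \<Longrightarrow> 1 \<le> ln (x::real)"
proof -
  assume "3 \<le> x"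
  then have "exp 1 \<le> x" using exp_le by linarith
  then have "ln (exp 1) \<le> ln x" using \<open>3 \<le> x\<close> by (subst ln_le_cancel_iff) auto
  then show ?thesis by simp
qed

lemma ev_real_ge: "eventually (\<lambda>J::nat. c \<le> real J) sequentially"
  using filterlim_real_sequentially unfolding filterlim_at_top by blast

lemma key:
  assumes a: "1 < a" "a \<le> b" and AB: "1/2 \<le> norm A" "norm A \<le> 1" "norm B \<le> 1"
    and eta: "0 < \<eta>"
    and hyp: "\<forall>u. \<bar>u\<bar> < \<eta> \<longrightarrow> norm (Hg a b A B (t0 + u) - Hg a b A B t0 - D * of_real u) \<le> \<epsilon> * \<bar>u\<bar>"
  shows "eventually (\<lambda>J. theta a * ln (real (J+2)) powr (b - a) \<le> 6 * \<epsilon>) sequentially"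
proof -
  define \<theta> where "\<theta> = theta a"
  note th = theta_props[OF a(1), folded \<theta>_def]
  define K where "K = 40 * (\<Sum>n. 1 / ww a n) + 8 * norm (Hg a b A B t0) + 28 * norm D"
  have S0: "0 \<le> (\<Sum>n. 1 / ww a n)"
    by (rule suminf_nonneg[OF summable_ww[OF a(1)]]) (simp add: ww_pos less_imp_le)
  have K0: "0 \<le> K" unfolding K_def using S0 by simp
  define C where "C = 6 * \<theta>^2 * K + 1"
  have C1: "1 \<le> C" unfolding C_def using K0 by simp
  have ev1: "eventually (\<lambda>J::nat. 2 \<le> J) sequentially" by (rule eventually_ge_at_top)
  have ev2: "eventually (\<lambda>J::nat. 1/\<theta> + 1/(\<theta>*(\<eta>/2)) \<le> real J) sequentially" by (rule ev_real_ge)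
  have ev3: "eventually (\<lambda>J::nat. ln (real (J+2)) powr a / real (J+2) < 1 / C) sequentially"
    by (rule order_tendstoD(2)[OF lim1]) (use C1 in simp)
  show ?thesis
  proof (rule eventually_mono[OF eventually_conj[OF ev1 eventually_conj[OF ev2 ev3]]])
    fix J :: nat
    assume asm: "2 \<le> J \<and> 1/\<theta> + 1/(\<theta>*(\<eta>/2)) \<le> real J \<and> ln (real (J+2)) powr a / real (J+2) < 1 / C"
    define x where "x = real (J+2)"
    define L where "L = ln x"
    have x4: "4 \<le> x" using asm unfolding x_def by simp
    have L1: "1 \<le> L" unfolding L_def using x4 by (intro ln_ge1) simp
    have Lb: "1 \<le> L powr b" using L1 a by (simp add: ge_one_powr_ge_zero)
    have xJ: "real J \<le> x" unfolding x_def by simp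
    have p1: "0 \<le> 1/\<theta>" "0 \<le> 1/(\<theta>*(\<eta>/2))" using th(1) eta by auto
    have t0: "1/\<theta> + 1/(\<theta>*(\<eta>/2)) \<le> real J" using asm by blast
    have t1: "1/\<theta> \<le> x" and t2: "1/(\<theta>*(\<eta>/2)) \<le> x" using t0 p1 xJ by linarith+
    have big: "1 \<le> \<theta> * real (J+2)" using t1 th(1) unfolding x_def by (simp add: field_simps)
    have cond: "6 * \<theta>^2 * K * ln (real (J+2)) powr a \<le> real (J+2)"
    proof -
      have "L powr a / x < 1 / C" using asm unfolding x_def L_def by simp
      then have "C * L powr a < x" using x4 C1 by (simp add: field_simps)
      moreover have "6 * \<theta>^2 * K * L powr a \<le> C * L powr a" unfolding C_def by (intro mult_right_mono) auto
      ultimately have "6 * \<theta>^2 * K * L powr a \<le> x" by linarith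
      then show ?thesis unfolding x_def L_def .
    qed
    have hyp': "norm (Hg a b A B (t0 + u) - Hg a b A B t0 - D * of_real u) \<le> \<epsilon> * \<bar>u\<bar>"
      if u: "\<bar>u\<bar> \<le> 1 / (\<theta> * real (J+2) * ln (real (J+2)) powr b)" for u
    proof -
      have "1/(\<eta>/2) \<le> \<theta> * x" using t2 th(1) eta by (simp add: field_simps)
      also have "\<theta> * x \<le> \<theta> * x * L powr b" using Lb th(1) x4 by simp
      finally have f: "1 / (\<eta>/2) \<le> \<theta> * x * L powr b" .
      have P0: "0 < \<theta> * x * L powr b" using th(1) x4 Lb by (intro mult_pos_pos) auto
      have "1 \<le> (\<eta>/2) * (\<theta> * x * L powr b)" using f eta by (simp add: divide_le_eq mult.commute)
      then have "1 / (\<theta> * x * L powr b) \<le> \<eta>/2" using P0 by (simp add: divide_le_eq mult.commute)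
      then have "\<bar>u\<bar> \<le> \<eta>/2" using u unfolding x_def L_def by simp
      then have "\<bar>u\<bar> < \<eta>" using eta by simp
      then show ?thesis using hyp by blast
    qed
    show "theta a * ln (real (J+2)) powr (b - a) \<le> 6 * \<epsilon>"
      using core[OF a AB th asm[THEN conjunct1] big K_def cond hyp'] unfolding \<theta>_def .
  qed
qed


lemma H_nondiff:
  assumes a: "1 < a" "a \<le> b" and AB: "1/2 \<le> norm A" "norm A \<le> 1" "norm B \<le> 1"
  shows "\<not> (\<exists>D. \<forall>e>0. \<exists>d>0. \<forall>u. \<bar>u\<bar> < d \<longrightarrow>
            norm (Hg a b A B (t0 + u) - Hg a b A B t0 - D * of_real u) \<le> e * \<bar>u\<bar>)"
proof
  assume "\<exists>D. \<forall>e>0. \<exists>d>0. \<forall>u. \<bar>u\<bar> < d \<longrightarrow>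
            norm (Hg a b A B (t0 + u) - Hg a b A B t0 - D * of_real u) \<le> e * \<bar>u\<bar>"
  then obtain D where D: "\<forall>e>0. \<exists>d>0. \<forall>u. \<bar>u\<bar> < d \<longrightarrow>
            norm (Hg a b A B (t0 + u) - Hg a b A B t0 - D * of_real u) \<le> e * \<bar>u\<bar>" by blast
  note th = theta_props[OF a(1)]
  have "0 < theta a / 12" using th(1) by simp
  then obtain d where d: "d > 0" "\<forall>u. \<bar>u\<bar> < d \<longrightarrow>
      norm (Hg a b A B (t0 + u) - Hg a b A B t0 - D * of_real u) \<le> theta a / 12 * \<bar>u\<bar>"
    using D by blast
  have ev: "eventually (\<lambda>J. theta a * ln (real (J+2)) powr (b - a) \<le> 6 * (theta a / 12)) sequentially"
    by (rule key[OF a AB d(1) d(2)])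
  have "eventually (\<lambda>J::nat. False) sequentially"
  proof (rule eventually_mono[OF eventually_conj[OF ev eventually_ge_at_top[of 1]]])
    fix J :: nat
    assume h0: "theta a * ln (real (J+2)) powr (b - a) \<le> 6 * (theta a / 12) \<and> 1 \<le> J"
    then have h: "theta a * ln (real (J+2)) powr (b - a) \<le> 6 * (theta a / 12)" by simp
    have "1 \<le> ln (real (J+2))" by (rule ln_ge1) (use h0 in simp)
    then have "1 \<le> ln (real (J+2)) powr (b - a)" using a by (intro ge_one_powr_ge_zero) auto
    then have "theta a * 1 \<le> theta a * ln (real (J+2)) powr (b - a)" using th(1) by (intro mult_left_mono) auto
    then show False using h th(1) by simp
  qed
  then show False by simp
qed

lemma H_nonlip:
  assumes a: "1 < a" "a < b" and AB: "1/2 \<le> norm A" "norm A \<le> 1" "norm B \<le> 1"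
  shows "\<not> (\<exists>Lc>0. \<exists>\<eta>>0. \<forall>u. \<bar>u\<bar> < \<eta> \<longrightarrow>
            norm (Hg a b A B (t0 + u) - Hg a b A B t0) \<le> Lc * \<bar>u\<bar>)"
proof
  assume "\<exists>Lc>0. \<exists>\<eta>>0. \<forall>u. \<bar>u\<bar> < \<eta> \<longrightarrow> norm (Hg a b A B (t0 + u) - Hg a b A B t0) \<le> Lc * \<bar>u\<bar>"
  then obtain Lc \<eta> where L: "Lc > 0" "\<eta> > 0"
    "\<forall>u. \<bar>u\<bar> < \<eta> \<longrightarrow> norm (Hg a b A B (t0 + u) - Hg a b A B t0) \<le> Lc * \<bar>u\<bar>" by blast
  have h: "\<forall>u. \<bar>u\<bar> < \<eta> \<longrightarrow> norm (Hg a b A B (t0 + u) - Hg a b A B t0 - 0 * of_real u) \<le> Lc * \<bar>u\<bar>"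
    using L(3) by simp
  note th = theta_props[OF a(1)]
  have ev: "eventually (\<lambda>J. theta a * ln (real (J+2)) powr (b - a) \<le> 6 * Lc) sequentially"
    by (rule key[OF a(1) _ AB L(2) h]) (use a in simp)
  have ev2: "eventually (\<lambda>J::nat. 6 * Lc / theta a + 1 \<le> ln (real (J+2)) powr (b - a)) sequentially"
    using lim2[of "b - a"] a unfolding filterlim_at_top by simp
  have "eventually (\<lambda>J::nat. False) sequentially"
  proof (rule eventually_mono[OF eventually_conj[OF ev ev2]])
    fix J :: nat
    assume h: "theta a * ln (real (J+2)) powr (b - a) \<le> 6 * Lc \<and> 6 * Lc / theta a + 1 \<le> ln (real (J+2)) powr (b - a)"
    then have "theta a * (6 * Lc / theta a + 1) \<le> theta a * ln (real (J+2)) powr (b - a)"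
      using th(1) by (intro mult_left_mono) auto
    then have "6 * Lc + theta a \<le> 6 * Lc" using h th(1) by (simp add: field_simps)
    then show False using th(1) by simp
  qed
  then show False by simp
qed

lemma Re_form: "1/2 * z + 1/2 * cnj z = complex_of_real (Re z)"
  by (simp add: complex_eq_iff)

lemma Im_form: "- (\<i>/2) * z + (\<i>/2) * cnj z = complex_of_real (Im z)"
  by (simp add: complex_eq_iff)

theorem mainTheorem11:
  fixes a b :: real
  assumes "1 < a" and "a \<le> b"
  shows "continuous_on UNIV (F1 a b) \<and> bounded (range (F1 a b))
       \<and> continuous_on UNIV (\<lambda>t. Re (F1 a b t)) \<and> bounded (range (\<lambda>t. Re (F1 a b t)))
       \<and> continuous_on UNIV (\<lambda>t. Im (F1 a b t)) \<and> bounded (range (\<lambda>t. Im (F1 a b t)))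
       \<and> (\<forall>t. \<not> (F1 a b) differentiable (at t))
       \<and> (\<forall>t. \<not> (\<lambda>s. Re (F1 a b s)) differentiable (at t))
       \<and> (\<forall>t. \<not> (\<lambda>s. Im (F1 a b s)) differentiable (at t))
       \<and> (a < b \<longrightarrow> (\<forall>t. \<not> lipschitz_at (F1 a b) t
                         \<and> \<not> lipschitz_at (\<lambda>s. Re (F1 a b s)) t
                         \<and> \<not> lipschitz_at (\<lambda>s. Im (F1 a b s)) t))"
proof -
  have a1: "1 < a" using assms(1) .
  have n1: "norm (1::complex) \<le> 1" "norm (0::complex) \<le> 1" "1/2 \<le> norm (1::complex)" by simp_all
  have n2: "norm (1/2::complex) \<le> 1" "1/2 \<le> norm (1/2::complex)" by simp_all
  have n3: "norm (- (\<i>/2)::complex) \<le> 1" "1/2 \<le> norm (- (\<i>/2)::complex)" "norm (\<i>/2::complex) \<le> 1"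
    by (simp_all add: norm_divide)
  have FR: "complex_of_real (Re (F1 a b t)) = Hg a b (1/2) (1/2) t" for t
    using Hg_eq[OF a1, of b "1/2" "1/2" t] Re_form[of "F1 a b t"] unfolding F1_eq by simp
  have FI: "complex_of_real (Im (F1 a b t)) = Hg a b (- (\<i>/2)) (\<i>/2) t" for t
    using Hg_eq[OF a1, of b "- (\<i>/2)" "\<i>/2" t] Im_form[of "F1 a b t"] unfolding F1_eq by simp
  have cF: "continuous_on UNIV (F1 a b)"
    unfolding F1_eq by (rule cont_Hg[OF a1]) simp_all
  define Bd where "Bd = (\<Sum>n. 2 / ww a n)"
  have bF: "norm (F1 a b t) \<le> Bd" for t
    unfolding F1_eq Bd_def by (rule bounded_Hg[OF a1]) simp_all
  have c1: "continuous_on UNIV (F1 a b)" by (rule cF)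
  have c2: "bounded (range (F1 a b))" unfolding bounded_iff using bF by blast
  have c3: "continuous_on UNIV (\<lambda>t. Re (F1 a b t))" by (intro continuous_intros cF)
  have c4: "bounded (range (\<lambda>t. Re (F1 a b t)))" unfolding bounded_iff
    by (intro exI[of _ Bd]) (auto intro: order_trans[OF abs_Re_le_cmod bF])
  have c5: "continuous_on UNIV (\<lambda>t. Im (F1 a b t))" by (intro continuous_intros cF)
  have c6: "bounded (range (\<lambda>t. Im (F1 a b t)))" unfolding bounded_iff
    by (intro exI[of _ Bd]) (auto intro: order_trans[OF abs_Im_le_cmod bF])
  have d1: "\<not> (F1 a b) differentiable (at t)" for t
  proof
    assume "(F1 a b) differentiable (at t)"
    from diff_eps[OF this] obtain D where D: "\<forall>e>0. \<exists>d>0. \<forall>u. \<bar>u\<bar> < d \<longrightarrow>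
       norm (F1 a b (t + u) - F1 a b t - u *\<^sub>R D) \<le> e * \<bar>u\<bar>" by blast
    have "\<exists>D. \<forall>e>0. \<exists>d>0. \<forall>u. \<bar>u\<bar> < d \<longrightarrow>
            norm (Hg a b 1 0 (t + u) - Hg a b 1 0 t - D * of_real u) \<le> e * \<bar>u\<bar>"
      using D unfolding F1_eq by (intro exI[of _ D]) (simp add: scaleR_conv_of_real mult.commute)
    then show False using H_nondiff[OF a1 assms(2) n1(3) n1(1) n1(2)] by blast
  qed
  have d2: "\<not> (\<lambda>s. Re (F1 a b s)) differentiable (at t)" for t
  proof
    assume "(\<lambda>s. Re (F1 a b s)) differentiable (at t)"
    from diff_eps[OF this] obtain D :: real where D: "\<forall>e>0. \<exists>d>0. \<forall>u. \<bar>u\<bar> < d \<longrightarrow>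
       norm (Re (F1 a b (t + u)) - Re (F1 a b t) - u *\<^sub>R D) \<le> e * \<bar>u\<bar>" by blast
    have eq: "norm (Hg a b (1/2) (1/2) (t + u) - Hg a b (1/2) (1/2) t - of_real D * of_real u)
        = norm (Re (F1 a b (t + u)) - Re (F1 a b t) - u *\<^sub>R D)" for u
      unfolding FR[symmetric] unfolding of_real_mult[symmetric] of_real_diff[symmetric] norm_of_real by (simp add: mult.commute)
    have "\<exists>D. \<forall>e>0. \<exists>d>0. \<forall>u. \<bar>u\<bar> < d \<longrightarrow>
            norm (Hg a b (1/2) (1/2) (t + u) - Hg a b (1/2) (1/2) t - D * of_real u) \<le> e * \<bar>u\<bar>"
      using D by (intro exI[of _ "of_real D"]) (simp only: eq)
    then show False using H_nondiff[OF a1 assms(2) n2(2) n2(1) n2(1)] by blast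
  qed
  have d3: "\<not> (\<lambda>s. Im (F1 a b s)) differentiable (at t)" for t
  proof
    assume "(\<lambda>s. Im (F1 a b s)) differentiable (at t)"
    from diff_eps[OF this] obtain D :: real where D: "\<forall>e>0. \<exists>d>0. \<forall>u. \<bar>u\<bar> < d \<longrightarrow>
       norm (Im (F1 a b (t + u)) - Im (F1 a b t) - u *\<^sub>R D) \<le> e * \<bar>u\<bar>" by blast
    have eq: "norm (Hg a b (- (\<i>/2)) (\<i>/2) (t + u) - Hg a b (- (\<i>/2)) (\<i>/2) t - of_real D * of_real u)
        = norm (Im (F1 a b (t + u)) - Im (F1 a b t) - u *\<^sub>R D)" for u
      unfolding FI[symmetric] unfolding of_real_mult[symmetric] of_real_diff[symmetric] norm_of_real by (simp add: mult.commute)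
    have "\<exists>D. \<forall>e>0. \<exists>d>0. \<forall>u. \<bar>u\<bar> < d \<longrightarrow>
            norm (Hg a b (- (\<i>/2)) (\<i>/2) (t + u) - Hg a b (- (\<i>/2)) (\<i>/2) t - D * of_real u) \<le> e * \<bar>u\<bar>"
      using D by (intro exI[of _ "of_real D"]) (simp only: eq)
    then show False using H_nondiff[OF a1 assms(2) n3(2) n3(1) n3(3)] by blast
  qed
  have l: "\<not> lipschitz_at (F1 a b) t \<and> \<not> lipschitz_at (\<lambda>s. Re (F1 a b s)) t
           \<and> \<not> lipschitz_at (\<lambda>s. Im (F1 a b s)) t" if ab: "a < b" for t
  proof (intro conjI notI)
    assume "lipschitz_at (F1 a b) t"
    then obtain Lc \<eta> where L: "Lc > 0" "\<eta> > 0"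
      "\<forall>s. \<bar>s - t\<bar> < \<eta> \<longrightarrow> norm (F1 a b s - F1 a b t) \<le> Lc * \<bar>s - t\<bar>"
      unfolding lipschitz_at_def by blast
    have "\<exists>Lc>0. \<exists>\<eta>>0. \<forall>u. \<bar>u\<bar> < \<eta> \<longrightarrow> norm (Hg a b 1 0 (t + u) - Hg a b 1 0 t) \<le> Lc * \<bar>u\<bar>"
      using L unfolding F1_eq by (intro exI[of _ Lc] conjI exI[of _ \<eta>]) (auto dest: spec[of _ "t + _"])
    then show False using H_nonlip[OF a1 ab n1(3) n1(1) n1(2)] by blast
  next
    assume "lipschitz_at (\<lambda>s. Re (F1 a b s)) t"
    then obtain Lc \<eta> where L: "Lc > 0" "\<eta> > 0"
      "\<forall>s. \<bar>s - t\<bar> < \<eta> \<longrightarrow> norm (Re (F1 a b s) - Re (F1 a b t)) \<le> Lc * \<bar>s - t\<bar>"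
      unfolding lipschitz_at_def by blast
    have eq: "norm (Hg a b (1/2) (1/2) (t + u) - Hg a b (1/2) (1/2) t) = norm (Re (F1 a b (t + u)) - Re (F1 a b t))" for u
      unfolding FR[symmetric] unfolding of_real_diff[symmetric] norm_of_real by simp
    have "\<exists>Lc>0. \<exists>\<eta>>0. \<forall>u. \<bar>u\<bar> < \<eta> \<longrightarrow> norm (Hg a b (1/2) (1/2) (t + u) - Hg a b (1/2) (1/2) t) \<le> Lc * \<bar>u\<bar>"
      unfolding eq using L by (intro exI[of _ Lc] conjI exI[of _ \<eta>]) (auto dest: spec[of _ "t + _"])
    then show False using H_nonlip[OF a1 ab n2(2) n2(1) n2(1)] by blast
  next
    assume "lipschitz_at (\<lambda>s. Im (F1 a b s)) t"
    then obtain Lc \<eta> where L: "Lc > 0" "\<eta> > 0"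
      "\<forall>s. \<bar>s - t\<bar> < \<eta> \<longrightarrow> norm (Im (F1 a b s) - Im (F1 a b t)) \<le> Lc * \<bar>s - t\<bar>"
      unfolding lipschitz_at_def by blast
    have eq: "norm (Hg a b (- (\<i>/2)) (\<i>/2) (t + u) - Hg a b (- (\<i>/2)) (\<i>/2) t) = norm (Im (F1 a b (t + u)) - Im (F1 a b t))" for u
      unfolding FI[symmetric] unfolding of_real_diff[symmetric] norm_of_real by simp
    have "\<exists>Lc>0. \<exists>\<eta>>0. \<forall>u. \<bar>u\<bar> < \<eta> \<longrightarrow> norm (Hg a b (- (\<i>/2)) (\<i>/2) (t + u) - Hg a b (- (\<i>/2)) (\<i>/2) t) \<le> Lc * \<bar>u\<bar>"
      unfolding eq using L by (intro exI[of _ Lc] conjI exI[of _ \<eta>]) (auto dest: spec[of _ "t + _"])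
    then show False using H_nonlip[OF a1 ab n3(2) n3(1) n3(3)] by blast
  qed
  show ?thesis using c1 c2 c3 c4 c5 c6 d1 d2 d3 l by blast
qed


end
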